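(* Let $n\geq3$, $\mathcal{O}\subset\mathbb{R}^n$ bounded open with $C^2$ boundary, $\beta>0$, and suppose (H1) holds. Then for every bounded interval $I\subset\mathbb{R}$, $D(A(t))=D$ for all $t\in I$, where $D=\{v\in H^2(\mathcal{O}): \sum_{k=1}^n n_k(y)\sum_{j=1}^n\tilde p_{jk}(y)\frac{\partial v}{\partial y_k}=0 \text{ on }\partial\mathcal{O}\}$ and $\tilde p_{jk}(y)=\sum_{i=1}^n p_{ij}(y)p_{ik}(y)$.
   Context: $r\in C^1(\mathbb{R}\times\overline{\mathcal{O}},\mathbb{R}^n)$ with $r(t,\cdot):\overline{\mathcal{O}}\to r(t,\overline{\mathcal{O}})$ a $C^2$ diffeomorphism for each $t$, inverse $r^{-1}(t,\cdot)=(r^{-1}_1,\dots,r^{-1}_n)$. $a_{jk}(t,y)=\sum_{i=1}^n \frac{\partial r^{-1}_j}{\partial x_i}(t,r(t,y))\frac{\partial r^{-1}_k}{\partial x_i}(t,r(t,y))$. $T(t,y)$ is the matrix with $(i,k)$ entry $\frac{\partial r^{-1}_k}{\partial x_i}(t,r(t,y))$, $n(y)$ the unit outward normal of $\partial\mathcal{O}$, $K(t,y)=1/\|T(t,y)n(y)\|$, $\Gamma(t,v)=K(t,y)\sum_k n_k(y)\sum_j a_{jk}(t,y)\frac{\partial v}{\partial y_k}$ on $\partial\mathcal{O}$. $A(t)v=-\sum_{j,k}\partial_{y_j}(a_{jk}(t,\cdot)\partial_{y_k}v)+\beta v$ with $D(A(t))=\{v\in H^2(\mathcal{O}):\Gamma(t,v)=0\text{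 on }\partial\mathcal{O}\}$. (H1): $r^{-1}(\cdot,x)$ is $C^1$ in $t$, and there are $h\in C(\mathbb{R})$, $p_{ik}\in C^1(\mathbb{R}^n,\mathbb{R})$ with $\frac{\partial r^{-1}_k}{\partial x_i}(t,r(t,y))=h(t)p_{ik}(y)$ for all $t$, $y\in\overline{\mathcal{O}}$, $i,k$; $h$ is Hölder continuous with exponent $\theta\in(0,1]$ and $0<h_0\le h\le h_1$. *)

theory Defs
  imports "HOL-Analysis.Analysis"
begin

definition C1_on :: "'a::euclidean_space set \<Rightarrow> ('a \<Rightarrow> 'b::real_normed_vector) \<Rightarrow> bool" where
  "C1_on U f \<longleftrightarrow> (\<exists>f'. (\<forall>x\<in>U. (f has_derivative blinfun_apply (f' x)) (at x)) \<and> continuous_on U f')"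

definition C2_on :: "'a::euclidean_space set \<Rightarrow> ('a \<Rightarrow> 'b::real_normed_vector) \<Rightarrow> bool" where
  "C2_on U f \<longleftrightarrow> (\<exists>f'. (\<forall>x\<in>U. (f has_derivative blinfun_apply (f' x)) (at x)) \<and> C1_on U f')"

text \<open>Partial derivative: pd f x i k = (d f_k / d x_i)(x).\<close>
definition pd :: "(real^'n \<Rightarrow> real^'m) \<Rightarrow> real^'n \<Rightarrow> 'n \<Rightarrow> 'm \<Rightarrow> real" where
  "pd f x i k = (frechet_derivative f (at x) (axis i 1)) $ k"

definition pds :: "(real^'n \<Rightarrow> real) \<Rightarrow> 'n \<Rightarrow> real^'n \<Rightarrow> real" where
  "pds f i x = frechet_derivative f (at x) (axis i 1)"

definition grad :: "(real^'n \<Rightarrow> real) \<Rightarrow> real^'n \<Rightarrow> real^'n" where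
  "grad f x = (\<chi> i. pds f i x)"

definition C2_boundary_normal :: "(real^'n) set \<Rightarrow> (real^'n \<Rightarrow> real^'n) \<Rightarrow> bool" where
  "C2_boundary_normal \<Omega> nu \<longleftrightarrow>
     (\<forall>x0\<in>frontier \<Omega>. \<exists>U \<phi>. open U \<and> x0 \<in> U \<and> C2_on U \<phi> \<and>
        (\<forall>y\<in>U. grad \<phi> y \<noteq> 0) \<and>
        \<Omega> \<inter> U = {y\<in>U. \<phi> y < 0} \<and> frontier \<Omega> \<inter> U = {y\<in>U. \<phi> y = 0} \<and>
        (\<forall>y\<in>frontier \<Omega> \<inter> U. nu y = grad \<phi> y /\<^sub>R norm (grad \<phi> y)))"

definition L2_on :: "(real^'n) set \<Rightarrow> (real^'n \<Rightarrow> real) \<Rightarrow> bool" where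
  "L2_on U f \<longleftrightarrow> f \<in> borel_measurable (lebesgue_on U) \<and> integrable (lebesgue_on U) (\<lambda>x. (f x)\<^sup>2)"

definition test_fun :: "(real^'n) set \<Rightarrow> (real^'n \<Rightarrow> real) \<Rightarrow> bool" where
  "test_fun U \<phi> \<longleftrightarrow> C1_on UNIV \<phi> \<and> compact (closure {x. \<phi> x \<noteq> 0}) \<and> closure {x. \<phi> x \<noteq> 0} \<subseteq> U"

definition weak_deriv :: "(real^'n) set \<Rightarrow> (real^'n \<Rightarrow> real) \<Rightarrow> 'n \<Rightarrow> (real^'n \<Rightarrow> real) \<Rightarrow> bool" where
  "weak_deriv U f i g \<longleftrightarrow>
     (\<forall>\<phi>. test_fun U \<phi> \<longrightarrow>
        integrable (lebesgue_on U) (\<lambda>x. f x * pds \<phi> i x) \<and>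
        integrable (lebesgue_on U) (\<lambda>x. g x * \<phi> x) \<and>
        integral\<^sup>L (lebesgue_on U) (\<lambda>x. f x * pds \<phi> i x) = - integral\<^sup>L (lebesgue_on U) (\<lambda>x. g x * \<phi> x))"

definition H1_on :: "(real^'n) set \<Rightarrow> (real^'n \<Rightarrow> real) \<Rightarrow> bool" where
  "H1_on U f \<longleftrightarrow> L2_on U f \<and> (\<forall>i. \<exists>g. L2_on U g \<and> weak_deriv U f i g)"

definition H2_on :: "(real^'n) set \<Rightarrow> (real^'n \<Rightarrow> real) \<Rightarrow> bool" where
  "H2_on U f \<longleftrightarrow> L2_on U f \<and> (\<forall>i. \<exists>g. H1_on U g \<and> weak_deriv U f i g)"

definition hausdorff_null :: "real \<Rightarrow> 'a::metric_space set \<Rightarrow> bool" where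
  "hausdorff_null d E \<longleftrightarrow>
     (\<forall>\<epsilon>>0. \<exists>C :: nat \<Rightarrow> 'a set. E \<subseteq> (\<Union>m. C m) \<and> (\<forall>m. bounded (C m)) \<and>
        summable (\<lambda>m. diameter (C m) powr d) \<and> (\<Sum>m. diameter (C m) powr d) < \<epsilon>)"

text \<open>Average of f over B(y,rho) \<inter> U; its limit as rho \<rightarrow> 0+ is the boundary trace
  (for surface-a.e. boundary point y).\<close>
definition bavg :: "(real^'n) set \<Rightarrow> (real^'n \<Rightarrow> real) \<Rightarrow> real^'n \<Rightarrow> real \<Rightarrow> real" where
  "bavg U f y \<rho> = integral\<^sup>L (lebesgue_on (ball y \<rho> \<inter> U)) f / measure lebesgue (ball y \<rho> \<inter> U)"

text \<open>For v with weak gradient (g_k) in H^1: the boundary condition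
  sum_k c_k(y) * tr(d v / d y_k)(y) = 0 for surface-a.e. y on the boundary of U.\<close>
definition bc_zero :: "(real^'n) set \<Rightarrow> ('n \<Rightarrow> real^'n \<Rightarrow> real) \<Rightarrow> (real^'n \<Rightarrow> real) \<Rightarrow> bool" where
  "bc_zero U c v \<longleftrightarrow>
     (\<exists>g. (\<forall>k. H1_on U (g k) \<and> weak_deriv U v k (g k)) \<and>
        hausdorff_null (real CARD('n) - 1)
          {y \<in> frontier U. \<not> (\<exists>L. (\<forall>k. ((\<lambda>\<rho>. bavg U (g k) y \<rho>) \<longlongrightarrow> L k) (at_right 0)) \<and>
                                   (\<Sum>k\<in>UNIV. c k y * L k) = 0)})"

definition a_coef :: "(real \<Rightarrow> real^'n \<Rightarrow> real^'n) \<Rightarrow> (real \<Rightarrow> real^'n \<Rightarrow> real^'n) \<Rightarrow> real \<Rightarrow> 'n \<Rightarrow> 'n \<Rightarrow> real^'n \<Rightarrow> real" where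
  "a_coef r rinv t j k y = (\<Sum>i\<in>UNIV. pd (rinv t) (r t y) i j * pd (rinv t) (r t y) i k)"

definition Tmat :: "(real \<Rightarrow> real^'n \<Rightarrow> real^'n) \<Rightarrow> (real \<Rightarrow> real^'n \<Rightarrow> real^'n) \<Rightarrow> real \<Rightarrow> real^'n \<Rightarrow> real^'n^'n" where
  "Tmat r rinv t y = (\<chi> i k. pd (rinv t) (r t y) i k)"

definition Kfun :: "(real \<Rightarrow> real^'n \<Rightarrow> real^'n) \<Rightarrow> (real \<Rightarrow> real^'n \<Rightarrow> real^'n) \<Rightarrow> (real^'n \<Rightarrow> real^'n) \<Rightarrow> real \<Rightarrow> real^'n \<Rightarrow> real" where
  "Kfun r rinv nu t y = 1 / norm (Tmat r rinv t y *v nu y)"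

text \<open>D(A(t)) = {v \<in> H^2(\<Omega>). Gamma(t,v) = 0 on the boundary}, where
  Gamma(t,v) = K(t,y) sum_k n_k(y) sum_j a_jk(t,y) dv/dy_k.\<close>
definition domA :: "(real^'n) set \<Rightarrow> (real \<Rightarrow> real^'n \<Rightarrow> real^'n) \<Rightarrow> (real \<Rightarrow> real^'n \<Rightarrow> real^'n) \<Rightarrow> (real^'n \<Rightarrow> real^'n) \<Rightarrow> real \<Rightarrow> (real^'n \<Rightarrow> real) set" where
  "domA \<Omega> r rinv nu t = {v. H2_on \<Omega> v \<and>
      bc_zero \<Omega> (\<lambda>k y. Kfun r rinv nu t y * (nu y $ k * (\<Sum>j\<in>UNIV. a_coef r rinv t j k y))) v}"

definition ptilde :: "('n \<Rightarrow> 'n \<Rightarrow> real^'n \<Rightarrow> real) \<Rightarrow> 'n \<Rightarrow> 'n \<Rightarrow> real^'n \<Rightarrow> real" where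
  "ptilde p j k y = (\<Sum>i\<in>UNIV. p i j y * p i k y)"

definition domD :: "(real^'n) set \<Rightarrow> ('n \<Rightarrow> 'n \<Rightarrow> real^'n \<Rightarrow> real) \<Rightarrow> (real^'n \<Rightarrow> real^'n) \<Rightarrow> (real^'n \<Rightarrow> real) set" where
  "domD \<Omega> p nu = {v. H2_on \<Omega> v \<and>
      bc_zero \<Omega> (\<lambda>k y. nu y $ k * (\<Sum>j\<in>UNIV. ptilde p j k y)) v}"

end

theory Submission
  imports Defs
begin

lemma surj_deriv:
  fixes \<Omega> :: "(real^'n) set" and r rinv :: "real^'n \<Rightarrow> real^'n"
  assumes O_open: "open \<Omega>"
    and r_C2: "\<exists>U. open U \<and> closure \<Omega> \<subseteq> U \<and> C2_on U r"
    and rinv_C2: "\<exists>V. open V \<and> r ` closure \<Omega> \<subseteq> V \<and> C2_on V rinv"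
    and rinv_left: "\<And>y. y \<in> closure \<Omega> \<Longrightarrow> rinv (r y) = y"
    and y: "y \<in> closure \<Omega>"
  shows "\<exists>R. (\<forall>v. frechet_derivative rinv (at (r y)) (R v) = v) \<and> linear (frechet_derivative rinv (at (r y)))"
proof -
  obtain U where U: "open U" "closure \<Omega> \<subseteq> U" "C2_on U r" using r_C2 by blast
  obtain V where V: "open V" "r ` closure \<Omega> \<subseteq> V" "C2_on V rinv" using rinv_C2 by blast
  obtain r' where r': "\<And>x. x\<in>U \<Longrightarrow> (r has_derivative blinfun_apply (r' x)) (at x)" "C1_on U r'"
    using U(3) unfolding C2_on_def by blast
  obtain f' where f': "\<And>x. x\<in>V \<Longrightarrow> (rinv has_derivative blinfun_apply (f' x)) (at x)" "C1_on V f'"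
    using V(3) unfolding C2_on_def by blast
  have cr': "continuous_on U r'"
  proof -
    obtain g where "\<forall>x\<in>U. (r' has_derivative blinfun_apply (g x)) (at x)" using r'(2) unfolding C1_on_def by blast
    then show ?thesis by (meson continuous_at_imp_continuous_on has_derivative_continuous)
  qed
  have cf': "continuous_on V f'"
  proof -
    obtain g where "\<forall>x\<in>V. (f' has_derivative blinfun_apply (g x)) (at x)" using f'(2) unfolding C1_on_def by blast
    then show ?thesis by (meson continuous_at_imp_continuous_on has_derivative_continuous)
  qed
  have cr: "continuous_on U r"
    by (meson continuous_at_imp_continuous_on has_derivative_continuous r'(1))
  have eq: "blinfun_apply (f' (r z)) (blinfun_apply (r' z) v) = v" if z: "z \<in> closure \<Omega>" for z v
  proof (rule continuous_constant_on_closure[where S=\<Omega> and f="\<lambda>z. blinfun_apply (f' (r z)) (blinfun_apply (r' z) v)"])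
    show "continuous_on (closure \<Omega>) (\<lambda>z. blinfun_apply (f' (r z)) (blinfun_apply (r' z) v))"
    proof (rule blinfun.continuous_on)
      show "continuous_on (closure \<Omega>) (\<lambda>z. f' (r z))"
        using continuous_on_compose2[OF cf' continuous_on_subset[OF cr U(2)] V(2)] by simp
      show "continuous_on (closure \<Omega>) (\<lambda>z. blinfun_apply (r' z) v)"
        by (intro blinfun.continuous_on continuous_on_subset[OF cr' U(2)] continuous_on_const)
    qed
  next
    fix x assume x: "x \<in> \<Omega>"
    have xc: "x \<in> closure \<Omega>" using x closure_subset by blast
    have d1: "((rinv \<circ> r) has_derivative (blinfun_apply (f' (r x)) \<circ> blinfun_apply (r' x))) (at x)"
      using diff_chain_at[OF r'(1) f'(1)] xc U(2) V(2) by blast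
    have d2: "((rinv \<circ> r) has_derivative id) (at x)"
      by (rule has_derivative_transform_within_open[OF has_derivative_id O_open x])
         (use rinv_left closure_subset in \<open>fastforce\<close>)
    have "blinfun_apply (f' (r x)) \<circ> blinfun_apply (r' x) = id" using has_derivative_unique[OF d1 d2] .
    then show "blinfun_apply (f' (r x)) (blinfun_apply (r' x) v) = v" by (metis comp_apply id_apply)
  qed (rule z)
  have "frechet_derivative rinv (at (r y)) = blinfun_apply (f' (r y))"
    using frechet_derivative_at[OF f'(1)] y V(2) by auto
  then show ?thesis using eq[OF y] by (intro exI[of _ "blinfun_apply (r' y)"]) (simp add: blinfun.bounded_linear_right bounded_linear.linear)
qed


lemma bc_zero_cong:
  fixes U :: "(real^'n) set" and c1 c2 :: "'n \<Rightarrow> real^'n \<Rightarrow> real"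
  assumes "\<And>y. y \<in> frontier U \<Longrightarrow> \<exists>c. c \<noteq> 0 \<and> (\<forall>k. c1 k y = c * c2 k y)"
  shows "bc_zero U c1 v = bc_zero U c2 v"
proof -
  have "{y \<in> frontier U. \<not> (\<exists>L. (\<forall>k. ((\<lambda>\<rho>. bavg U (g k) y \<rho>) \<longlongrightarrow> L k) (at_right 0)) \<and>
                                   (\<Sum>k\<in>UNIV. c1 k y * L k) = 0)}
      = {y \<in> frontier U. \<not> (\<exists>L. (\<forall>k. ((\<lambda>\<rho>. bavg U (g k) y \<rho>) \<longlongrightarrow> L k) (at_right 0)) \<and>
                                   (\<Sum>k\<in>UNIV. c2 k y * L k) = 0)}" for g
  proof (rule Collect_cong, rule conj_cong[OF refl])
    fix y assume "y \<in> frontier U"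
    then obtain c where c: "c \<noteq> 0" "\<And>k. c1 k y = c * c2 k y" using assms by blast
    have "(\<Sum>k\<in>UNIV. c1 k y * L k) = c * (\<Sum>k\<in>UNIV. c2 k y * L k)" for L :: "'n \<Rightarrow> real"
      by (simp add: c(2) sum_distrib_left mult.assoc)
    then show "(\<not> (\<exists>L. (\<forall>k. ((\<lambda>\<rho>. bavg U (g k) y \<rho>) \<longlongrightarrow> L k) (at_right 0)) \<and>
                                   (\<Sum>k\<in>UNIV. c1 k y * L k) = 0)) =
          (\<not> (\<exists>L. (\<forall>k. ((\<lambda>\<rho>. bavg U (g k) y \<rho>) \<longlongrightarrow> L k) (at_right 0)) \<and>
                                   (\<Sum>k\<in>UNIV. c2 k y * L k) = 0))" using c(1) by simp
  qed
  then show ?thesis unfolding bc_zero_def by simp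
qed

theorem lemma3p1:
  fixes \<Omega> :: "(real^'n) set"
    and nu :: "real^'n \<Rightarrow> real^'n"
    and \<beta> :: real
    and r rinv :: "real \<Rightarrow> real^'n \<Rightarrow> real^'n"
    and h :: "real \<Rightarrow> real"
    and p :: "'n \<Rightarrow> 'n \<Rightarrow> real^'n \<Rightarrow> real"
    and \<theta> h0 h1 :: real
  assumes dim: "CARD('n) \<ge> 3"
    and O_open: "open \<Omega>" and O_bounded: "bounded \<Omega>"
    and O_C2: "C2_boundary_normal \<Omega> nu"
    and beta_pos: "\<beta> > 0"
    and r_C1: "\<exists>U. open U \<and> closure \<Omega> \<subseteq> U \<and> C1_on (UNIV \<times> U) (\<lambda>(t, y). r t y)"
    and r_C2: "\<And>t. \<exists>U. open U \<and> closure \<Omega> \<subseteq> U \<and> C2_on U (r t)"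
    and rinv_C2: "\<And>t. \<exists>V. open V \<and> r t ` closure \<Omega> \<subseteq> V \<and> C2_on V (rinv t)"
    and rinv_left: "\<And>t y. y \<in> closure \<Omega> \<Longrightarrow> rinv t (r t y) = y"
    and rinv_right: "\<And>t x. x \<in> r t ` closure \<Omega> \<Longrightarrow> r t (rinv t x) = x"
    and H1_time: "\<And>x. C1_on UNIV (\<lambda>t. rinv t x)"
    and h_cont: "continuous_on UNIV h"
    and p_C1: "\<And>i k. C1_on UNIV (p i k)"
    and H1_fact: "\<And>t y i k. y \<in> closure \<Omega> \<Longrightarrow> pd (rinv t) (r t y) i k = h t * p i k y"
    and theta: "0 < \<theta>" "\<theta> \<le> 1"
    and h_hoelder: "\<exists>C. \<forall>s t. \<bar>h s - h t\<bar> \<le> C * \<bar>s - t\<bar> powr \<theta>"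
    and h_bounds: "0 < h0" "\<And>t. h0 \<le> h t" "\<And>t. h t \<le> h1"
  shows "\<forall>I :: real set. is_interval I \<and> bounded I \<longrightarrow>
           (\<forall>t\<in>I. domA \<Omega> r rinv nu t = domD \<Omega> p nu)"
proof (intro allI impI ballI)
  fix I :: "real set" and t assume "is_interval I \<and> bounded I" "t \<in> I"
  have fac: "\<exists>c. c \<noteq> 0 \<and> (\<forall>k. Kfun r rinv nu t y * (nu y $ k * (\<Sum>j\<in>UNIV. a_coef r rinv t j k y))
              = c * (nu y $ k * (\<Sum>j\<in>UNIV. ptilde p j k y)))" if yf: "y \<in> frontier \<Omega>" for y
  proof -
    have y: "y \<in> closure \<Omega>" using yf by (simp add: frontier_def)
    have nu0: "nu y \<noteq> 0"
    proof -
      have "\<exists>U \<phi>. open U \<and> y \<in> U \<and> C2_on U \<phi> \<and>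
        (\<forall>y\<in>U. grad \<phi> y \<noteq> 0) \<and>
        \<Omega> \<inter> U = {y\<in>U. \<phi> y < 0} \<and> frontier \<Omega> \<inter> U = {y\<in>U. \<phi> y = 0} \<and>
        (\<forall>y\<in>frontier \<Omega> \<inter> U. nu y = grad \<phi> y /\<^sub>R norm (grad \<phi> y))"
        by (rule bspec[OF O_C2[unfolded C2_boundary_normal_def] yf])
      then obtain U \<phi> where U: "y \<in> U" "\<forall>y\<in>U. grad \<phi> y \<noteq> 0"
        "\<forall>y\<in>frontier \<Omega> \<inter> U. nu y = grad \<phi> y /\<^sub>R norm (grad \<phi> y)"
        by (elim exE conjE) blast
      have "nu y = grad \<phi> y /\<^sub>R norm (grad \<phi> y)" using U(1,3) yf by blast
      then show ?thesis using U(1,2) by simp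
    qed
    let ?D = "frechet_derivative (rinv t) (at (r t y))"
    obtain R where R: "\<And>v. ?D (R v) = v" "linear ?D"
      using surj_deriv[OF O_open r_C2 rinv_C2 rinv_left y] by blast
    have Tnz: "Tmat r rinv t y *v nu y \<noteq> 0"
    proof
      assume T0: "Tmat r rinv t y *v nu y = 0"
      have comp: "?D (axis i 1) \<bullet> nu y = 0" for i
      proof -
        have "?D (axis i 1) \<bullet> nu y = (Tmat r rinv t y *v nu y) $ i"
          by (simp add: inner_vec_def matrix_vector_mult_def Tmat_def pd_def)
        then show ?thesis using T0 by simp
      qed
      let ?w = "R (nu y)"
      have "?D ?w = ?D (\<Sum>i\<in>UNIV. ?w $ i *\<^sub>R axis i 1)"
        using basis_expansion[of ?w] by (simp add: scalar_mult_eq_scaleR)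
      also have "\<dots> = (\<Sum>i\<in>UNIV. ?w $ i *\<^sub>R ?D (axis i 1))"
        using R(2) by (simp add: linear_sum linear_scale)
      finally have "?D ?w \<bullet> nu y = (\<Sum>i\<in>UNIV. ?w $ i * (?D (axis i 1) \<bullet> nu y))"
        by (simp add: inner_sum_left)
      also have "\<dots> = 0" using comp by simp
      finally have "nu y \<bullet> nu y = 0" using R(1) by simp
      then show False using nu0 by simp
    qed
    have a: "a_coef r rinv t j k y = (h t)\<^sup>2 * ptilde p j k y" for j k
      by (simp add: a_coef_def ptilde_def H1_fact[OF y] sum_distrib_left power2_eq_square algebra_simps)
    have hpos: "h t > 0" using h_bounds(1) h_bounds(2)[of t] by linarith
    show ?thesis
    proof (intro exI[of _ "Kfun r rinv nu t y * (h t)\<^sup>2"] conjI allI)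
      show "Kfun r rinv nu t y * (h t)\<^sup>2 \<noteq> 0" using Tnz hpos by (simp add: Kfun_def)
      fix k
      have S: "(\<Sum>j\<in>UNIV. a_coef r rinv t j k y) = (h t)\<^sup>2 * (\<Sum>j\<in>UNIV. ptilde p j k y)"
        by (simp add: a sum_distrib_left)
      show "Kfun r rinv nu t y * (nu y $ k * (\<Sum>j\<in>UNIV. a_coef r rinv t j k y))
              = Kfun r rinv nu t y * (h t)\<^sup>2 * (nu y $ k * (\<Sum>j\<in>UNIV. ptilde p j k y))"
        unfolding S by (simp add: algebra_simps)
    qed
  qed
  have "bc_zero \<Omega> (\<lambda>k y. Kfun r rinv nu t y * (nu y $ k * (\<Sum>j\<in>UNIV. a_coef r rinv t j k y))) v
      = bc_zero \<Omega> (\<lambda>k y. nu y $ k * (\<Sum>j\<in>UNIV. ptilde p j k y)) v" for v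
    by (rule bc_zero_cong) (use fac in blast)
  then show "domA \<Omega> r rinv nu t = domD \<Omega> p nu"
    unfolding domA_def domD_def by simp
qed

end
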